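(* Let $G$ be a residually finite group and let $A$ be a finite set. Suppose that $X \subset A^G$ is a strongly irreducible subshift of finite type and that there exists a periodic configuration in $X$. Then the set of periodic configurations of $X$ is dense in $X$.
   Context: $A^G=\{x\colon G\to A\}$ carries the prodiscrete topology (product of discrete topologies) and the $G$-shift action $(gx)(h)=x(g^{-1}h)$ for $g,h\in G$. A subshift is a closed $G$-invariant subset of $A^G$. A configuration $x$ is periodic if its $G$-orbit is finite. For a finite $\Omega\subset G$ and $x\in A^G$, $x|_\Omega$ denotes the restriction. A subshift $X$ is of finite type if there are a finite $\Omega\subset G$ and $\mathcal P\subset A^\Omega$ with $X=\{x\in A^G : (gx)|_\Omega\in\mathcal P \text{ for all } g\in G\}$. For finite $\Delta\subset G$, $X$ is $\Delta$-irreducible if whenever $\Omega_1,\Omega_2$ are finite subsets of $G$ with $\Omega_1\Delta^{-1}\cap\Omega_2=\varnothing$ and $x_1,x_2\in X$, there is $x\in X$ with $x|_{\Omega_1}=x_1|_{\Omega_1}$ and $x|_{\Omega_2}=x_2|_{\Omega_2}$. $X$ is strongly irreducible if it is $\Delta$-irreducible for some finite $\Delta\subset G$. A group is residually finite if the intersection of its finite-index subgroups is trivial. *)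

theory Defs
  imports "HOL-Analysis.Analysis"
begin

text \<open>The group G is a type of class group_add (a not necessarily commutative
group, written additively); the alphabet A is a finite type.\<close>

definition prodiscrete :: "('g \<Rightarrow> 'a) topology" where
  "prodiscrete = product_topology (\<lambda>_. discrete_topology UNIV) UNIV"

definition shift :: "'g::group_add \<Rightarrow> ('g \<Rightarrow> 'a) \<Rightarrow> ('g \<Rightarrow> 'a)" where
  "shift g x = (\<lambda>h. x (- g + h))"

definition subshift :: "('g::group_add \<Rightarrow> 'a) set \<Rightarrow> bool" where
  "subshift X \<longleftrightarrow> closedin prodiscrete X \<and> (\<forall>g. \<forall>x\<in>X. shift g x \<in> X)"

definition periodic_config :: "('g::group_add \<Rightarrow> 'a) \<Rightarrow> bool" where
  "periodic_config x \<longleftrightarrow> finite (range (\<lambda>g. shift g x))"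

definition finite_type :: "('g::group_add \<Rightarrow> 'a) set \<Rightarrow> bool" where
  "finite_type X \<longleftrightarrow> (\<exists>\<Omega> P. finite \<Omega> \<and> P \<subseteq> (\<Omega> \<rightarrow>\<^sub>E UNIV) \<and>
      X = {x. \<forall>g. restrict (shift g x) \<Omega> \<in> P})"

definition irreducible_wrt :: "'g::group_add set \<Rightarrow> ('g \<Rightarrow> 'a) set \<Rightarrow> bool" where
  "irreducible_wrt \<Delta> X \<longleftrightarrow>
     (\<forall>\<Omega>1 \<Omega>2. finite \<Omega>1 \<longrightarrow> finite \<Omega>2 \<longrightarrow>
        {a + - d | a d. a \<in> \<Omega>1 \<and> d \<in> \<Delta>} \<inter> \<Omega>2 = {} \<longrightarrow>
        (\<forall>x1\<in>X. \<forall>x2\<in>X. \<exists>x\<in>X. restrict x \<Omega>1 = restrict x1 \<Omega>1 \<and>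
                                  restrict x \<Omega>2 = restrict x2 \<Omega>2))"

definition strongly_irreducible :: "('g::group_add \<Rightarrow> 'a) set \<Rightarrow> bool" where
  "strongly_irreducible X \<longleftrightarrow> (\<exists>\<Delta>. finite \<Delta> \<and> irreducible_wrt \<Delta> X)"

definition is_subgroup :: "'g::group_add set \<Rightarrow> bool" where
  "is_subgroup H \<longleftrightarrow> 0 \<in> H \<and> (\<forall>a\<in>H. \<forall>b\<in>H. a + b \<in> H) \<and> (\<forall>a\<in>H. - a \<in> H)"

definition finite_index :: "'g::group_add set \<Rightarrow> bool" where
  "finite_index H \<longleftrightarrow> finite {(\<lambda>h. g + h) ` H | g. True}"

definition residually_finite :: "'g::group_add itself \<Rightarrow> bool" where
  "residually_finite _ \<longleftrightarrow> \<Inter>{H :: 'g set. is_subgroup H \<and> finite_index H} = {0}"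

end

theory Submission
  imports Defs
begin


lemma closure_crit:
  fixes x :: "'g \<Rightarrow> 'a" and S :: "('g \<Rightarrow> 'a) set"
  assumes "\<And>F. finite F \<Longrightarrow> \<exists>y\<in>S. \<forall>k\<in>F. y k = x k"
  shows "x \<in> prodiscrete closure_of S"
  unfolding in_closure_of prodiscrete_def
proof (intro conjI allI impI)
  show "x \<in> topspace (product_topology (\<lambda>_. discrete_topology UNIV) UNIV)" by simp
  fix T assume T: "x \<in> T \<and> openin (product_topology (\<lambda>_::'g. discrete_topology (UNIV::'a set)) UNIV) T"
  then obtain U where U: "finite {i \<in> UNIV. U i \<noteq> topspace (discrete_topology UNIV)}"
     "x \<in> Pi\<^sub>E UNIV U" "Pi\<^sub>E UNIV U \<subseteq> T"
    unfolding openin_product_topology_alt by blast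
  let ?F = "{i. U i \<noteq> UNIV}"
  have "finite ?F" using U(1) by simp
  then obtain y where y: "y \<in> S" "\<forall>k\<in>?F. y k = x k" using assms by blast
  have "y \<in> Pi\<^sub>E UNIV U" using U(2) y(2) by (auto simp: PiE_iff) (metis UNIV_I)
  then show "\<exists>y. y \<in> S \<and> y \<in> T" using U(3) y(1) by blast
qed

lemma shift_add: "shift (a + b) x = shift a (shift b x)"
  unfolding shift_def fun_eq_iff by (metis minus_add add.assoc)

lemma shift_0[simp]: "shift 0 x = x"
  by (simp add: shift_def)

lemma subgroup_Int: "is_subgroup H \<Longrightarrow> is_subgroup K \<Longrightarrow> is_subgroup (H \<inter> K)"
  by (auto simp: is_subgroup_def)

lemma coset_Int: "(\<lambda>h. g + h) ` (H \<inter> K) = ((\<lambda>h. g + h) ` H) \<inter> ((\<lambda>h. (g::'g::group_add) + h) ` K)"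
  by (auto simp: image_iff)

lemma finite_index_Int:
  fixes H K :: "'g::group_add set"
  assumes "finite_index H" "finite_index K"
  shows "finite_index (H \<inter> K)"
proof -
  have "{(\<lambda>h. g + h) ` (H \<inter> K) | g. True} \<subseteq>
        (\<lambda>(A,B). A \<inter> B) ` ({(\<lambda>h. g + h) ` H | g. True} \<times> {(\<lambda>h. g + h) ` K | g. True})"
    by (auto simp: coset_Int image_iff)
  then show ?thesis using assms unfolding finite_index_def
    by (meson finite_SigmaI finite_imageI finite_subset)
qed

lemma finite_index_UNIV: "finite_index (UNIV :: 'g::group_add set)"
proof -
  have "(\<lambda>h. g + h) ` (UNIV::'g set) = UNIV" for g
    by (metis surj_def add_minus_cancel)
  then have "{(\<lambda>h. g + h) ` (UNIV::'g set) | g. True} = {UNIV}" by auto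
  then show ?thesis unfolding finite_index_def by simp
qed

lemma avoid_subgroup:
  fixes S :: "'g::group_add set"
  assumes rf: "residually_finite TYPE('g)" and "finite S" "0 \<notin> S"
  shows "\<exists>H. is_subgroup H \<and> finite_index H \<and> H \<inter> S = {}"
  using assms(2,3)
proof (induction S rule: finite_induct)
  case empty
  then show ?case using finite_index_UNIV by (auto simp: is_subgroup_def)
next
  case (insert s S)
  then obtain H where H: "is_subgroup H" "finite_index H" "H \<inter> S = {}" by auto
  have "s \<notin> \<Inter>{H :: 'g set. is_subgroup H \<and> finite_index H}"
    using rf insert.prems unfolding residually_finite_def by auto
  then obtain K where K: "is_subgroup K" "finite_index K" "s \<notin> K" by auto
  show ?case
    by (rule exI[of _ "H \<inter> K"]) (use H K subgroup_Int finite_index_Int in auto)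
qed




lemma stab_subgroup: "is_subgroup {g::'g::group_add. shift g p = p}"
  unfolding is_subgroup_def
  by (auto simp: shift_add) (metis shift_add add.left_inverse shift_0)

lemma stab_finite_index:
  fixes p :: "'g::group_add \<Rightarrow> 'a"
  assumes "periodic_config p"
  shows "finite_index {g. shift g p = p}"
proof -
  let ?S = "{g. shift g p = p}"
  have "(\<lambda>h. g + h) ` ?S = {k. shift k p = shift g p}" for g
  proof safe
    fix h assume "shift h p = p" then show "shift (g + h) p = shift g p" by (simp add: shift_add)
  next
    fix k assume k: "shift k p = shift g p"
    have "shift (- g + k) p = shift (- g + g) p" by (simp only: shift_add k)
    then have "shift (- g + k) p = p" by simp
    moreover have "k = g + (- g + k)" by (simp add: add.assoc[symmetric])
    ultimately show "k \<in> (\<lambda>h. g + h) ` ?S" by blast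
  qed
  then have "{(\<lambda>h. g + h) ` ?S | g. True} = (\<lambda>q. {k. shift k p = q}) ` range (\<lambda>g. shift g p)"
    by auto
  then show ?thesis using assms unfolding finite_index_def periodic_config_def by simp
qed

lemma periodic_of_invariant:
  fixes y :: "'g::group_add \<Rightarrow> 'a"
  assumes "is_subgroup H" "finite_index H" "\<And>h. h \<in> H \<Longrightarrow> shift h y = y"
  shows "periodic_config y"
proof -
  let ?C = "{(\<lambda>h. g + h) ` H | g. True}"
  have "range (\<lambda>g. shift g y) \<subseteq> (\<lambda>c. shift (SOME g. c = (\<lambda>h. g + h) ` H) y) ` ?C"
  proof clarify
    fix g
    let ?c = "(\<lambda>h. g + h) ` H"
    have "\<exists>g'. ?c = (\<lambda>h. g' + h) ` H" by blast
    then have e: "?c = (\<lambda>h. (SOME g'. ?c = (\<lambda>h. g' + h) ` H) + h) ` H" by (rule someI_ex)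
    define g' where "g' = (SOME g'. ?c = (\<lambda>h. g' + h) ` H)"
    have "g \<in> ?c" using assms(1) unfolding is_subgroup_def by force
    then obtain h where h: "h \<in> H" "g = g' + h" using e unfolding g'_def by auto
    then have "shift g y = shift g' y" by (simp add: shift_add assms(3))
    then show "shift g y \<in> (\<lambda>c. shift (SOME g. c = (\<lambda>h. g + h) ` H) y) ` ?C"
      unfolding g'_def by blast
  qed
  then show ?thesis using assms(2) unfolding periodic_config_def finite_index_def
    by (meson finite_imageI finite_subset)
qed


theorem theorem1p1:
  fixes X :: "('g::group_add \<Rightarrow> 'a::finite) set"
  assumes "residually_finite TYPE('g)"
    and "subshift X" and "finite_type X" and "strongly_irreducible X"
    and "\<exists>x\<in>X. periodic_config x"
  shows "X \<subseteq> prodiscrete closure_of {x\<in>X. periodic_config x}"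
proof
  obtain \<Omega> P where \<Omega>: "finite \<Omega>" and XP: "X = {x. \<forall>g. restrict (shift g x) \<Omega> \<in> P}"
    using assms(3) unfolding finite_type_def by blast
  have memX: "x \<in> X \<longleftrightarrow> (\<forall>a. (\<lambda>w\<in>\<Omega>. x (a + w)) \<in> P)" for x
  proof -
    have rs: "restrict (shift g x) \<Omega> = (\<lambda>w\<in>\<Omega>. x (- g + w))" for g
      by (simp add: shift_def)
    have "(\<forall>g. restrict (shift g x) \<Omega> \<in> P) \<longleftrightarrow> (\<forall>a. (\<lambda>w\<in>\<Omega>. x (a + w)) \<in> P)"
    proof
      assume L: "\<forall>g. restrict (shift g x) \<Omega> \<in> P"
      show "\<forall>a. (\<lambda>w\<in>\<Omega>. x (a + w)) \<in> P"
      proof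
        fix a show "(\<lambda>w\<in>\<Omega>. x (a + w)) \<in> P" using L[rule_format, of "- a"] rs[of "- a"] by simp
      qed
    next
      assume R: "\<forall>a. (\<lambda>w\<in>\<Omega>. x (a + w)) \<in> P"
      show "\<forall>g. restrict (shift g x) \<Omega> \<in> P"
      proof
        fix g show "restrict (shift g x) \<Omega> \<in> P" using R[rule_format, of "- g"] rs[of g] by simp
      qed
    qed
    then show ?thesis unfolding XP by simp
  qed
  obtain \<Delta> where \<Delta>: "finite \<Delta>" "irreducible_wrt \<Delta> X"
    using assms(4) unfolding strongly_irreducible_def by blast
  obtain p where p: "p \<in> X" "periodic_config p" using assms(5) by blast
  fix x assume x: "x \<in> X"
  show "x \<in> prodiscrete closure_of {x\<in>X. periodic_config x}"
  proof (rule closure_crit)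
    fix F :: "'g set" assume F: "finite F"
    define C where "C = F \<union> {a + - d | a d. a \<in> F \<and> d \<in> \<Delta>}"
    define D where "D = C \<union> {c + - w + w' | c w w'. c \<in> C \<and> w \<in> \<Omega> \<and> w' \<in> \<Omega>}"
    define B where "B = D - C"
    have fC: "finite C" unfolding C_def using F \<Delta>(1)
      by (simp add: finite_image_set2)
    have "{c + - w + w' | c w w'. c \<in> C \<and> w \<in> \<Omega> \<and> w' \<in> \<Omega>} = 
          (\<lambda>(c,w,w'). c + - w + w') ` (C \<times> \<Omega> \<times> \<Omega>)" by (auto simp: image_iff) blast
    then have fD: "finite D" unfolding D_def using fC \<Omega> by simp
    have fB: "finite B" unfolding B_def using fD by simp
    have "{a + - d | a d. a \<in> F \<and> d \<in> \<Delta>} \<inter> B = {}" unfolding B_def C_def by auto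
    then have "\<exists>z\<in>X. restrict z F = restrict x F \<and> restrict z B = restrict p B"
      using \<Delta>(2) F fB x p(1) unfolding irreducible_wrt_def
      by (simp only: )
    then obtain z where z: "z \<in> X" "restrict z F = restrict x F" "restrict z B = restrict p B"
      by blast
    have zF: "k \<in> F \<Longrightarrow> z k = x k" for k using z(2) by (metis restrict_apply')
    have zB: "k \<in> B \<Longrightarrow> z k = p k" for k using z(3) by (metis restrict_apply')
    define DD where "DD = {a + - b | a b. a \<in> D \<and> b \<in> D} - {0}"
    have "{a + - b | a b. a \<in> D \<and> b \<in> D} = (\<lambda>(a,b). a + - b) ` (D \<times> D)" by auto
    then have fDD: "finite DD" unfolding DD_def using fD by simp
    obtain H0 where H0: "is_subgroup H0" "finite_index H0" "H0 \<inter> DD = {}"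
      using avoid_subgroup[OF assms(1) fDD] unfolding DD_def by blast
    define H where "H = H0 \<inter> {g. shift g p = p}"
    have H: "is_subgroup H" "finite_index H" "H \<inter> DD = {}"
      unfolding H_def using H0 subgroup_Int[OF H0(1) stab_subgroup] finite_index_Int[OF H0(2) stab_finite_index[OF p(2)]]
      by auto
    have H0in: "0 \<in> H" and Hadd: "\<And>a b. a \<in> H \<Longrightarrow> b \<in> H \<Longrightarrow> a + b \<in> H"
      and Hneg: "\<And>a. a \<in> H \<Longrightarrow> - a \<in> H" using H(1) unfolding is_subgroup_def by auto
    have pH: "h \<in> H \<Longrightarrow> p (- h + k) = p k" for h k
      unfolding H_def shift_def by (metis (mono_tags, lifting) IntD2 mem_Collect_eq)
    have uniq: "h = h'" if "h \<in> H" "h' \<in> H" "- h + k \<in> D" "- h' + k \<in> D" for h h' k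
    proof (rule ccontr)
      assume ne: "h \<noteq> h'"
      have "- h' + h = (- h' + k) + - (- h + k)" by (simp only: minus_add add.assoc minus_minus minus_add_cancel add_minus_cancel add.left_inverse add.right_inverse add_0_left add_0_right)
      moreover have "- h' + h \<noteq> 0" using ne by (metis add_minus_cancel add.right_neutral)
      ultimately have "- h' + h \<in> DD" unfolding DD_def using that by blast
      moreover have "- h' + h \<in> H" using that Hadd Hneg by blast
      ultimately show False using H(3) by blast
    qed
    define y where "y k = (if \<exists>h\<in>H. - h + k \<in> D then z (- (THE h. h \<in> H \<and> - h + k \<in> D) + k) else p k)" for k
    have yD: "y k = z (- h + k)" if "h \<in> H" "- h + k \<in> D" for h k
    proof -
      have "(THE h. h \<in> H \<and> - h + k \<in> D) = h" using that uniq by blast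
      then show ?thesis unfolding y_def using that by auto
    qed
    have yN: "y k = p k" if "\<not> (\<exists>h\<in>H. - h + k \<in> D)" for k
      unfolding y_def using that by auto
    have yF: "\<forall>k\<in>F. y k = x k"
    proof
      fix k assume "k \<in> F"
      then have "- 0 + k \<in> D" unfolding D_def C_def by simp
      then show "y k = x k" using yD[OF H0in] zF \<open>k \<in> F\<close> by simp
    qed
    have yinv: "shift h y = y" if h: "h \<in> H" for h
    proof
      fix k
      show "shift h y k = y k"
      proof (cases "\<exists>h'\<in>H. - h' + k \<in> D")
        case True
        then obtain h' where h': "h' \<in> H" "- h' + k \<in> D" by blast
        have "- (- h + h') + (- h + k) = - h' + k" by (simp only: minus_add add.assoc minus_minus minus_add_cancel add_minus_cancel add.left_inverse add.right_inverse add_0_left add_0_right)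
        moreover have "- h + h' \<in> H" using h h' Hadd Hneg by blast
        ultimately have "y (- h + k) = z (- h' + k)" using yD h' by metis
        then show ?thesis using yD h' by (simp add: shift_def)
      next
        case False
        have "\<not> (\<exists>h''\<in>H. - h'' + (- h + k) \<in> D)"
        proof
          assume "\<exists>h''\<in>H. - h'' + (- h + k) \<in> D"
          then obtain h'' where "h'' \<in> H" "- h'' + (- h + k) \<in> D" by blast
          moreover have "- h'' + (- h + k) = - (h + h'') + k" by (simp only: minus_add add.assoc minus_minus minus_add_cancel add_minus_cancel add.left_inverse add.right_inverse add_0_left add_0_right)
          ultimately show False using False Hadd h by metis
        qed
        then show ?thesis using yN False pH h by (simp add: shift_def)
      qed
    qed
    have yX: "y \<in> X" unfolding memX
    proof
      fix a
      show "(\<lambda>w\<in>\<Omega>. y (a + w)) \<in> P"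
      proof (cases "\<exists>w\<in>\<Omega>. \<exists>h\<in>H. - h + (a + w) \<in> C")
        case True
        then obtain w h where wh: "w \<in> \<Omega>" "h \<in> H" "- h + (a + w) \<in> C" by blast
        have "(\<lambda>w\<in>\<Omega>. y (a + w)) = (\<lambda>w\<in>\<Omega>. z ((- h + a) + w))"
        proof
          fix w'
          show "(\<lambda>w\<in>\<Omega>. y (a + w)) w' = (\<lambda>w\<in>\<Omega>. z ((- h + a) + w)) w'"
          proof (cases "w' \<in> \<Omega>")
            case True
            have "- h + (a + w') = (- h + (a + w)) + - w + w'" by (simp only: minus_add add.assoc minus_minus minus_add_cancel add_minus_cancel add.left_inverse add.right_inverse add_0_left add_0_right)
            then have "- h + (a + w') \<in> D" unfolding D_def using wh True by blast
            then show ?thesis using yD[OF wh(2)] True by (simp add: add.assoc)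
          qed simp
        qed
        then show ?thesis using z(1) memX by metis
      next
        case False
        have "(\<lambda>w\<in>\<Omega>. y (a + w)) = (\<lambda>w\<in>\<Omega>. p (a + w))"
        proof
          fix w'
          show "(\<lambda>w\<in>\<Omega>. y (a + w)) w' = (\<lambda>w\<in>\<Omega>. p (a + w)) w'"
          proof (cases "w' \<in> \<Omega>")
            case True
            show ?thesis
            proof (cases "\<exists>h\<in>H. - h + (a + w') \<in> D")
              case True2: True
              then obtain h where h: "h \<in> H" "- h + (a + w') \<in> D" by blast
              then have "- h + (a + w') \<in> B" using False True unfolding B_def by blast
              then show ?thesis using yD[OF h] zB pH h(1) True by simp
            next
              case False
              then show ?thesis using yN True by simp
            qed
          qed simp
        qed
        then show ?thesis using p(1) memX by metis
      qed
    qed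
    have "periodic_config y" using periodic_of_invariant[OF H(1,2)] yinv by blast
    then show "\<exists>y\<in>{x \<in> X. periodic_config x}. \<forall>k\<in>F. y k = x k" using yX yF by blast
  qed
qed

end
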